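(* Let $Q:(-\infty,-1)\to(-\infty,0)$ be the inverse of the strictly increasing function $G\mapsto G-e^G$ on $(-\infty,0)$, and define $R:\mathbb{R}\to\mathbb{R}$ by $R(V)=-2(1-e^{Q(V)})^2$ for $V<-1$ and $R(V)=4(V+1)$ for $V\ge -1$. Fix $m<-1$. For $n\in\mathbb{R}$ let $V(t;n)$ denote the unique solution of $V''+3V'=R(V)$, $t>0$, $V(0)=m$, $V'(0)=n$ (prime denoting $d/dt$, $V_t=dV/dt$). Define $\beta^0=\{n\in\mathbb{R}: V_t(t;n)>0 \text{ and } V(t;n)\le -1 \text{ for all } t>0\}$. Then $\beta^0$ is a nonempty closed set. Moreover, if $n\in\beta^0$, then $V(t;n)<-1$ for all $t>0$. *)

theory Defs
  imports "HOL-Analysis.Analysis"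
begin

definition Qinv :: "real \<Rightarrow> real" where
  "Qinv v = (THE g. g < 0 \<and> g - exp g = v)"

definition Rfun :: "real \<Rightarrow> real" where
  "Rfun v = (if v < -1 then -2 * (1 - exp (Qinv v))^2 else 4 * (v + 1))"

end

theory Submission
  imports Defs
begin


lemma gexp_strict: fixes g1 g2 :: real assumes "g1 < g2" "g2 \<le> 0"
  shows "g1 - exp g1 < g2 - exp g2"
proof -
  have "\<exists>z. g1 < z \<and> z < g2 \<and> (g2 - exp g2) - (g1 - exp g1) = (g2 - g1) * (1 - exp z)"
    using assms by (intro MVT2[of g1 g2 "\<lambda>x. x - exp x" "\<lambda>x. 1 - exp x"]) (auto intro!: derivative_eq_intros)
  then obtain z where z: "g1 < z" "z < g2" "(g2 - exp g2) - (g1 - exp g1) = (g2 - g1) * (1 - exp z)"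
    by blast
  have "exp z < 1" using z assms by simp
  then have "(g2 - g1) * (1 - exp z) > 0" using assms by simp
  with z show ?thesis by linarith
qed

lemma Q_props: fixes v :: real assumes "v < -1"
  shows "Qinv v < 0 \<and> Qinv v - exp (Qinv v) = v"
proof -
  have "\<exists>g. v \<le> g \<and> g \<le> 0 \<and> g - exp g = v"
    using assms by (intro IVT'[of "\<lambda>x. x - exp x"]) (auto intro!: continuous_intros)
  then obtain g where g: "g \<le> 0" "g - exp g = v" by blast
  have g0: "g < 0" using g assms by (cases "g = 0") auto
  have "\<exists>!g. g < 0 \<and> g - exp g = v"
  proof
    show "g < 0 \<and> g - exp g = v" using g g0 by auto
    fix h assume h: "h < 0 \<and> h - exp h = v"
    show "h = g"
    proof (rule ccontr)
      assume "h \<noteq> g"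
      then consider "h < g" | "g < h" by linarith
      then show False
        using gexp_strict[of h g] gexp_strict[of g h] h g g0 by (cases; auto)
    qed
  qed
  then show ?thesis unfolding Qinv_def by (rule theI')
qed

definition phi :: "real \<Rightarrow> real" where "phi g = 2*g - 4 * exp g + (exp g)^2"

lemma phi_mono: "a \<le> b \<Longrightarrow> phi a \<le> phi b"
  unfolding phi_def
proof (rule DERIV_nonneg_imp_nondecreasing[of a b])
  fix x :: real
  show "\<exists>y. ((\<lambda>g. 2*g - 4 * exp g + (exp g)^2) has_real_derivative y) (at x) \<and> 0 \<le> y"
    apply (rule exI[of _ "2 * (1 - exp x)^2"])
    apply (intro conjI)
     apply (rule derivative_eq_intros refl | simp)+
     apply (simp add: power2_eq_square algebra_simps)
    apply simp
    done
qed

lemma Q_mono: assumes "v1 \<le> v2" "v2 < -1" shows "Qinv v1 \<le> Qinv v2"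
  using Q_props[of v1] Q_props[of v2] assms gexp_strict[of "Qinv v2" "Qinv v1"]
  by force

lemma R_low: "v < -1 \<Longrightarrow> Rfun v = -2 * (1 - exp (Qinv v))^2" by (simp add: Rfun_def)
lemma R_high: "v \<ge> -1 \<Longrightarrow> Rfun v = 4 * (v + 1)" by (simp add: Rfun_def)

lemma R_ge: "Rfun v \<ge> -2"
proof (cases "v < -1")
  case True
  have "exp (Qinv v) < 1" using Q_props[OF True] by simp
  then have "(1 - exp (Qinv v))^2 \<le> 1^2"
    by (intro power_mono) auto
  then show ?thesis using R_low[OF True] by simp
qed (simp add: Rfun_def)

lemma R_neg: "v < -1 \<Longrightarrow> Rfun v < 0"
  using Q_props[of v] R_low[of v] by simp

lemma R_m1: "Rfun (-1) = 0" by (simp add: Rfun_def)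

lemma R_lip_ord: assumes "x \<le> y" shows "0 \<le> Rfun y - Rfun x \<and> Rfun y - Rfun x \<le> 4 * (y - x)"
proof (cases "y < -1")
  case True
  then have x: "x < -1" using assms by simp
  define g1 where "g1 = Qinv x"
  define g2 where "g2 = Qinv y"
  have q1: "g1 < 0" "g1 - exp g1 = x" using Q_props[OF x] g1_def by auto
  have q2: "g2 < 0" "g2 - exp g2 = y" using Q_props[OF True] g2_def by auto
  have le: "g1 \<le> g2" using Q_mono[OF assms True] g1_def g2_def by simp
  have e: "exp g1 \<le> exp g2" "exp g2 < 1" using le q2 by auto
  have p: "phi g1 \<le> phi g2" using phi_mono[OF le] .
  have r: "Rfun y - Rfun x = 2 * (1 - exp g1)^2 - 2 * (1 - exp g2)^2"
    using R_low[OF x] R_low[OF True] g1_def g2_def by simp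
  have "0 \<le> 2 * (1 - exp g1)^2 - 2 * (1 - exp g2)^2"
  proof -
    have "(1 - exp g2)^2 \<le> (1 - exp g1)^2" using e by (intro power_mono) auto
    then show ?thesis by simp
  qed
  moreover have "2 * (1 - exp g1)^2 - 2 * (1 - exp g2)^2 \<le> 4 * (y - x)"
    using p q1 q2 unfolding phi_def by (simp add: power2_eq_square algebra_simps)
  ultimately show ?thesis using r by simp
next
  case False
  then have y: "y \<ge> -1" by simp
  show ?thesis
  proof (cases "x < -1")
    case True
    define g1 where "g1 = Qinv x"
    have q1: "g1 < 0" "g1 - exp g1 = x" using Q_props[OF True] g1_def by auto
    have p: "phi g1 \<le> phi 0" using phi_mono[of g1 0] q1 by simp
    have "Rfun x = -2 * (1 - exp g1)^2" using R_low[OF True] g1_def by simp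
    moreover have "2 * (1 - exp g1)^2 \<le> 4 * (-1 - x)"
      using p q1 unfolding phi_def by (simp add: power2_eq_square algebra_simps)
    ultimately show ?thesis using R_high[OF y] y by simp
  next
    case False
    then show ?thesis using R_high[OF y] R_high[of x] assms by simp
  qed
qed

lemma R_lip: "\<bar>Rfun x - Rfun y\<bar> \<le> 4 * \<bar>x - y\<bar>"
  using R_lip_ord[of x y] R_lip_ord[of y x] by (cases "x \<le> y") auto

lemma R_bound: "\<bar>Rfun x\<bar> \<le> 4 * \<bar>x + 1\<bar>"
  using R_lip[of x "-1"] R_m1 by simp



lemma key1: fixes a b r :: real assumes "\<bar>r\<bar> \<le> 4 * \<bar>a\<bar>"
  shows "0 \<le> 11 * (a^2 + b^2) + 2 * a * b + 2 * b * (r - 3 * b)"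
proof -
  have "\<bar>b * r\<bar> \<le> \<bar>b\<bar> * (4 * \<bar>a\<bar>)" unfolding abs_mult using assms by (intro mult_left_mono) auto
  moreover have "2 * \<bar>a\<bar> * \<bar>b\<bar> \<le> a^2 + b^2"
    using sum_squares_ge_zero[of "\<bar>a\<bar> - \<bar>b\<bar>" 0] by (simp add: power2_eq_square algebra_simps)
  moreover have "\<bar>a * b\<bar> = \<bar>a\<bar> * \<bar>b\<bar>" by (simp add: abs_mult)
  moreover have "- \<bar>a * b\<bar> \<le> a * b" "- \<bar>b * r\<bar> \<le> b * r" by linarith+
  moreover have "\<bar>b\<bar> * (4 * \<bar>a\<bar>) = 4 * (\<bar>a\<bar> * \<bar>b\<bar>)" "2 * \<bar>a\<bar> * \<bar>b\<bar> = 2 * (\<bar>a\<bar> * \<bar>b\<bar>)" by simp_all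
  moreover have "0 \<le> a^2" by simp
  ultimately have "0 \<le> 11 * a^2 + 5 * b^2 + 2 * (a * b) + 2 * (b * r)" by linarith
  moreover have "11 * (a^2 + b^2) + 2 * a * b + 2 * b * (r - 3 * b) = 11 * a^2 + 5 * b^2 + 2 * (a * b) + 2 * (b * r)"
    by (simp add: algebra_simps power2_eq_square)
  ultimately show ?thesis by simp
qed

lemma key2: fixes a b r :: real assumes "\<bar>r\<bar> \<le> 4 * \<bar>a\<bar>"
  shows "2 * a * b + 2 * b * (r - 3 * b) - 5 * (a^2 + b^2) \<le> 0"
proof -
  have "\<bar>b * r\<bar> \<le> \<bar>b\<bar> * (4 * \<bar>a\<bar>)" unfolding abs_mult using assms by (intro mult_left_mono) auto
  moreover have "2 * \<bar>a\<bar> * \<bar>b\<bar> \<le> a^2 + b^2"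
    using sum_squares_ge_zero[of "\<bar>a\<bar> - \<bar>b\<bar>" 0] by (simp add: power2_eq_square algebra_simps)
  moreover have "\<bar>a * b\<bar> = \<bar>a\<bar> * \<bar>b\<bar>" by (simp add: abs_mult)
  moreover have "a * b \<le> \<bar>a * b\<bar>" "b * r \<le> \<bar>b * r\<bar>" by linarith+
  moreover have "0 \<le> b^2" by simp
  moreover have "2 * a * b + 2 * b * (r - 3 * b) - 5 * (a^2 + b^2) = 2 * (a * b) + 2 * (b * r) - 5 * a^2 - 11 * b^2"
    by (simp add: algebra_simps power2_eq_square)
  moreover have "\<bar>b\<bar> * (4 * \<bar>a\<bar>) = 4 * (\<bar>a\<bar> * \<bar>b\<bar>)" "2 * \<bar>a\<bar> * \<bar>b\<bar> = 2 * (\<bar>a\<bar> * \<bar>b\<bar>)" by simp_all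
  ultimately show ?thesis by linarith
qed

lemma first_zero: fixes w :: "real \<Rightarrow> real"
  assumes c: "continuous_on {a..b} w" and wa: "w a < 0" and s: "s \<in> {a..b}" "w s \<ge> 0"
  shows "\<exists>T. a < T \<and> T \<le> b \<and> w T = 0 \<and> (\<forall>x\<in>{a..<T}. w x < 0)"
proof -
  define S where "S = {a..b} \<inter> w -` {0}"
  have "closed S" unfolding S_def by (rule continuous_closed_preimage[OF c]) auto
  moreover have "bounded S" unfolding S_def by (rule bounded_subset[of "{a..b}"]) auto
  ultimately have cS: "compact S" by (simp add: compact_eq_bounded_closed)
  have ivt: "\<exists>z\<in>S. z \<le> x" if "x \<in> {a..b}" "w x \<ge> 0" for x
  proof -
    have "\<exists>z. a \<le> z \<and> z \<le> x \<and> w z = 0"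
      using that wa by (intro IVT') (auto intro: continuous_on_subset[OF c])
    then show ?thesis unfolding S_def using that by auto
  qed
  have "S \<noteq> {}" using ivt[OF s] by auto
  then obtain T where T: "T \<in> S" "\<forall>x\<in>S. T \<le> x" using compact_attains_inf[OF cS] by auto
  have "T \<noteq> a" using T wa unfolding S_def by auto
  then have "a < T" using T unfolding S_def by auto
  moreover have "\<forall>x\<in>{a..<T}. w x < 0"
  proof
    fix x assume x: "x \<in> {a..<T}"
    show "w x < 0"
    proof (rule ccontr)
      assume "\<not> w x < 0"
      then obtain z where "z \<in> S" "z \<le> x" using ivt[of x] x T unfolding S_def by force
      then show False using T x by force
    qed
  qed
  ultimately show ?thesis using T unfolding S_def by auto
qed

lemma abs3: "(a::real) = b - 3 * c + d \<Longrightarrow> \<bar>b\<bar> < e/3 \<Longrightarrow> \<bar>c\<bar> < e/9 \<Longrightarrow> \<bar>d\<bar> < e/3 \<Longrightarrow> \<bar>a\<bar> < e"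
  unfolding abs_less_iff by linarith

locale traj =
  fixes v w :: "real \<Rightarrow> real" and m n :: real
  assumes m: "m < -1"
    and dv: "\<And>t. t \<ge> 0 \<Longrightarrow> (v has_real_derivative w t) (at t within {0..})"
    and dw: "\<And>t. t > 0 \<Longrightarrow> (w has_real_derivative (Rfun (v t) - 3 * w t)) (at t)"
    and v0: "v 0 = m"
    and w0: "w 0 = n"
begin

lemma dv_at: assumes "t > 0" shows "(v has_real_derivative w t) (at t)"
proof -
  have "at t within {0..} = at t within UNIV"
    by (rule at_within_nhd[of t "{0<..}"]) (use assms in auto)
  then show ?thesis using dv[of t] assms by simp
qed

lemma v_cont_on: "continuous_on {0..} v"
  using dv by (auto simp: continuous_on_eq_continuous_within intro: DERIV_continuous)

lemma v_tendsto0: "(v \<longlongrightarrow> m) (at_right 0)"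
proof -
  have "continuous (at 0 within {0..}) v" using dv[of 0] by (auto intro: DERIV_continuous)
  then have "(v \<longlongrightarrow> m) (at 0 within {0..})" using v0 by (simp add: continuous_within)
  then show ?thesis by (rule tendsto_within_subset) auto
qed

lemma w_isCont: "t > 0 \<Longrightarrow> isCont w t"
  using dw DERIV_isCont by blast

lemma v_isCont: "t > 0 \<Longrightarrow> isCont v t"
  using dv_at DERIV_isCont by blast

lemma v_mvt: assumes "0 \<le> a" "a < b" shows "\<exists>z. a < z \<and> z < b \<and> v b - v a = (b - a) * w z"
proof -
  have "continuous_on {a..b} v" using v_cont_on by (rule continuous_on_subset) (use assms in auto)
  moreover have "\<And>x. a < x \<Longrightarrow> x < b \<Longrightarrow> v differentiable (at x)"
    using dv_at assms real_differentiable_def by (metis le_less_trans)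
  ultimately obtain l z where z: "a < z" "z < b" "DERIV v z :> l" "v b - v a = (b - a) * l"
    using MVT[OF assms(2)] by blast
  have "l = w z" using z dv_at[of z] assms DERIV_unique by (metis le_less_trans)
  then show ?thesis using z by blast
qed

lemma dY: "t > 0 \<Longrightarrow> ((\<lambda>s. w s + 3 * v s) has_real_derivative Rfun (v t)) (at t)"
  using dw[of t] dv_at[of t] by (auto intro!: derivative_eq_intros)

lemma w_tendsto0: "(w \<longlongrightarrow> n) (at_right 0)"
proof -
  obtain B where B: "\<And>t. t \<in> {0..1} \<Longrightarrow> \<bar>v t\<bar> \<le> B"
  proof -
    have "compact (v ` {0..1})"
      by (rule compact_continuous_image, rule continuous_on_subset[OF v_cont_on]) auto
    then obtain B where "\<forall>x\<in>v ` {0..1}. norm x \<le> B" using compact_imp_bounded bounded_iff by metis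
    then show ?thesis using that by force
  qed
  define M where "M = 4 * (\<bar>B\<bar> + 1)"
  have M0: "M > 0" unfolding M_def by simp
  have RM: "\<bar>Rfun (v t)\<bar> \<le> M" if "t \<in> {0..1}" for t
  proof -
    have "\<bar>Rfun (v t)\<bar> \<le> 4 * \<bar>v t + 1\<bar>" by (rule R_bound)
    also have "\<dots> \<le> 4 * (\<bar>B\<bar> + 1)" using B[OF that] by (smt (verit))
    finally show ?thesis unfolding M_def .
  qed
  define Y where "Y s = w s + 3 * v s" for s
  have Ylip: "\<bar>Y t - Y s\<bar> \<le> M * \<bar>t - s\<bar>" if "0 < s" "s \<le> 1" "0 < t" "t \<le> 1" for s t
  proof -
    have gen: "\<bar>Y b - Y a\<bar> \<le> M * (b - a)" if "0 < a" "a < b" "b \<le> 1" for a b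
    proof -
      have "\<exists>z. a < z \<and> z < b \<and> Y b - Y a = (b - a) * Rfun (v z)"
        unfolding Y_def
        by (rule MVT2) (use that dY in auto)
      then obtain z where z: "a < z" "z < b" "Y b - Y a = (b - a) * Rfun (v z)" by blast
      have "\<bar>(b - a) * Rfun (v z)\<bar> = (b - a) * \<bar>Rfun (v z)\<bar>" using that by (simp add: abs_mult)
      also have "\<dots> \<le> (b - a) * M" using RM[of z] z that by (intro mult_left_mono) auto
      finally show ?thesis using z by (simp add: mult.commute)
    qed
    consider "s < t" | "s = t" | "t < s" by linarith
    then show ?thesis
    proof cases
      case 1 then show ?thesis using gen[of s t] that by simp
    next
      case 3 then show ?thesis using gen[of t s] that by (simp add: abs_minus_commute)
    qed simp
  qed
  have dq: "((\<lambda>s. (v s - m) / s) \<longlongrightarrow> n) (at_right 0)"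
  proof -
    have "((\<lambda>y. (v y - v 0) / (y - 0)) \<longlongrightarrow> w 0) (at 0 within {0..})"
      using dv[of 0] by (simp add: has_field_derivative_iff)
    then have "((\<lambda>y. (v y - v 0) / (y - 0)) \<longlongrightarrow> w 0) (at_right 0)"
      by (rule tendsto_within_subset) auto
    then show ?thesis using v0 w0 by simp
  qed
  show ?thesis unfolding tendsto_iff dist_real_def
  proof (intro allI impI)
    fix e :: real assume e: "e > 0"
    have "eventually (\<lambda>s. \<bar>(v s - m) / s - n\<bar> < e/3) (at_right 0)"
      using dq[unfolded tendsto_iff dist_real_def, rule_format, of "e/3"] e by simp
    then obtain d1 where d1: "d1 > 0" "\<And>s. 0 < s \<Longrightarrow> s < d1 \<Longrightarrow> \<bar>(v s - m) / s - n\<bar> < e/3"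
      unfolding eventually_at_right_field by auto
    have "eventually (\<lambda>s. \<bar>v s - m\<bar> < e/18) (at_right 0)"
      using v_tendsto0[unfolded tendsto_iff dist_real_def, rule_format, of "e/18"] e by simp
    then obtain d2 where d2: "d2 > 0" "\<And>s. 0 < s \<Longrightarrow> s < d2 \<Longrightarrow> \<bar>v s - m\<bar> < e/18"
      unfolding eventually_at_right_field by auto
    define q where "q = e / (3 * M + 1)"
    have q: "q > 0" unfolding q_def using e M0 by simp
    define s where "s = min (min (d1/2) (d2/2)) (min 1 q)"
    have s: "s > 0" "s < d1" "s < d2" "s \<le> 1" "s \<le> e / (3 * M + 1)"
      unfolding s_def q_def[symmetric] using d1 d2 q by auto
    have Ms: "M * s < e / 3"
    proof -
      have "M * s \<le> M * (e / (3 * M + 1))" using s M0 by (intro mult_left_mono) auto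
      also have "\<dots> < e / 3" using M0 e by (simp add: field_simps)
      finally show ?thesis .
    qed
    obtain xi where xi: "0 < xi" "xi < s" "v s - v 0 = (s - 0) * w xi"
      using v_mvt[of 0 s] s by auto
    have wxi: "\<bar>w xi - n\<bar> < e/3"
    proof -
      have "w xi = (v s - m) / s" using xi s v0 by (simp add: field_simps)
      then show ?thesis using d1(2)[of s] s by simp
    qed
    show "eventually (\<lambda>t. \<bar>w t - n\<bar> < e) (at_right 0)"
    proof (rule eventually_at_rightI[of 0 s])
      fix t assume t: "t \<in> {0<..<s}"
      have "w t - n = (Y t - Y xi) - 3 * (v t - v xi) + (w xi - n)" unfolding Y_def by simp
      moreover have "\<bar>Y t - Y xi\<bar> < e/3"
      proof -
        have "\<bar>Y t - Y xi\<bar> \<le> M * \<bar>t - xi\<bar>" using Ylip[of xi t] t xi s by auto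
        also have "\<dots> \<le> M * s" using t xi M0 by (intro mult_left_mono) auto
        finally show ?thesis using Ms by simp
      qed
      moreover have "\<bar>v t - v xi\<bar> < e/9"
      proof -
        have "\<bar>v t - m\<bar> < e/18" using d2(2)[of t] t s by auto
        moreover have "\<bar>v xi - m\<bar> < e/18" using d2(2)[of xi] xi s by auto
        ultimately show ?thesis by linarith
      qed
      ultimately show "\<bar>w t - n\<bar> < e" using wxi by (rule abs3)
    qed (use s in auto)
  qed
qed

end

context traj begin
lemma dq: "((\<lambda>s. (v s - m) / s) \<longlongrightarrow> n) (at_right 0)"
proof -
  have "((\<lambda>y. (v y - v 0) / (y - 0)) \<longlongrightarrow> w 0) (at 0 within {0..})"
    using dv[of 0] by (simp add: has_field_derivative_iff)
  then have "((\<lambda>y. (v y - v 0) / (y - 0)) \<longlongrightarrow> w 0) (at_right 0)"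
    by (rule tendsto_within_subset) auto
  then show ?thesis using v0 w0 by simp
qed

lemma w_cont_on: "0 < a \<Longrightarrow> continuous_on {a..b} w"
  using w_isCont by (intro continuous_at_imp_continuous_on) auto



lemma no_equil: assumes t0: "t0 > 0" "v t0 = -1" "w t0 = 0" shows False
proof -
  define f where "f s = exp (11 * s) * ((v s + 1)^2 + (w s)^2)" for s
  have df: "\<exists>y. DERIV f s :> y \<and> y \<ge> 0" if "s > 0" for s
  proof -
    have "DERIV f s :> exp (11 * s) * 11 * ((v s + 1)^2 + (w s)^2) + exp (11 * s) * (2 * (v s + 1) * w s + 2 * w s * (Rfun (v s) - 3 * w s))"
      unfolding f_def
      apply (rule derivative_eq_intros dv_at[OF that] dw[OF that] refl)+
      apply (simp add: algebra_simps)
      done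
    moreover have "0 \<le> exp (11 * s) * 11 * ((v s + 1)^2 + (w s)^2) + exp (11 * s) * (2 * (v s + 1) * w s + 2 * w s * (Rfun (v s) - 3 * w s))"
    proof -
      have "0 \<le> 11 * ((v s + 1)^2 + (w s)^2) + 2 * (v s + 1) * w s + 2 * w s * (Rfun (v s) - 3 * w s)"
        by (rule key1) (rule R_bound)
      then have "0 \<le> exp (11 * s) * (11 * ((v s + 1)^2 + (w s)^2) + 2 * (v s + 1) * w s + 2 * w s * (Rfun (v s) - 3 * w s))"
        by (intro mult_nonneg_nonneg) auto
      then show ?thesis by (simp only: distrib_left mult.assoc)
    qed
    ultimately show ?thesis by blast
  qed
  have vs: "v s = -1" if "0 < s" "s \<le> t0" for s
  proof -
    have "f s \<le> f t0"
      apply (rule DERIV_nonneg_imp_nondecreasing[of s t0 f])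
      using that apply simp
      apply (rule df) using that by simp
    also have "f t0 = 0" unfolding f_def using t0 by simp
    finally have "exp (11 * s) * ((v s + 1)^2 + (w s)^2) \<le> 0" unfolding f_def .
    then have "(v s + 1)^2 + (w s)^2 \<le> 0" 
      using exp_gt_zero[of "11 * s"] by (simp add: mult_le_0_iff)
    then have "v s + 1 = 0" unfolding sum_power2_le_zero_iff by simp
    then show ?thesis by simp
  qed
  have "(v \<longlongrightarrow> -1) (at_right 0)"
  proof (rule tendsto_eventually)
    show "eventually (\<lambda>s. v s = -1) (at_right 0)"
      by (rule eventually_at_rightI[of 0 t0]) (use vs t0 in auto)
  qed
  then have "m = -1" using tendsto_unique[OF trivial_limit_at_right_real v_tendsto0] by simp
  then show False using m by simp
qed

lemma invB: assumes t1: "t1 > 0" "v t1 < -1" "w t1 < 0" and t2: "t1 \<le> t2"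
  shows "v t2 < -1"
proof -
  have neg: "\<forall>x\<in>{t1..t2}. w x < 0"
  proof (rule ccontr)
    assume "\<not> (\<forall>x\<in>{t1..t2}. w x < 0)"
    then obtain s where s: "s \<in> {t1..t2}" "w s \<ge> 0" by force
    obtain T where T: "t1 < T" "T \<le> t2" "w T = 0" "\<forall>x\<in>{t1..<T}. w x < 0"
      using first_zero[OF w_cont_on[OF t1(1)] t1(3) s] by blast
    have "v T \<le> v t1"
      apply (rule DERIV_nonpos_imp_nonincreasing[of t1 T v])
      using T apply simp
      subgoal for x using dv_at[of x] t1 T by (cases "x = T") force+
      done
    then have "v T < -1" using t1 by simp
    then have "Rfun (v T) - 3 * w T < 0" using R_neg T by simp
    then obtain d where d: "d > 0" "\<forall>h>0. h < d \<longrightarrow> w T < w (T - h)"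
      using DERIV_neg_dec_left[OF dw[of T]] T t1 by force
    obtain mn where mm: "mn \<le> T - t1" "mn \<le> d" "mn > 0" using d T by (intro that[of "min d (T - t1)"]) auto
    define h where "h = mn / 2"
    have h01: "h > 0" using mm h_def by linarith
    have h02: "h < d" using mm h_def by linarith
    have h03: "t1 \<le> T - h" using mm h_def by linarith
    have h04: "T - h < T" using mm h_def by linarith
    note h0 = h01 h02 h03 h04
    then have h: "h > 0" "h < d" "T - h \<in> {t1..<T}" by auto
    then have "w (T - h) < 0" using T by blast
    moreover have "w T < w (T - h)" using d h by blast
    ultimately show False using T by simp
  qed
  have "v t2 \<le> v t1"
    apply (rule DERIV_nonpos_imp_nonincreasing[of t1 t2 v])
    using t2 apply simp
    subgoal for x using dv_at[of x] t1 neg by force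
    done
  then show ?thesis using t1 by simp
qed

lemma invA: assumes t1: "t1 > 0" "v t1 > -1" "w t1 > 0" and t2: "t1 \<le> t2"
  shows "v t2 > -1"
proof -
  have pos: "\<forall>x\<in>{t1..t2}. w x > 0"
  proof (rule ccontr)
    assume "\<not> (\<forall>x\<in>{t1..t2}. w x > 0)"
    then obtain s where s: "s \<in> {t1..t2}" "- w s \<ge> 0" by force
    have c: "continuous_on {t1..t2} (\<lambda>x. - w x)"
      using w_cont_on[OF t1(1)] by (intro continuous_intros)
    obtain T where T: "t1 < T" "T \<le> t2" "- w T = 0" "\<forall>x\<in>{t1..<T}. - w x < 0"
      using first_zero[OF c _ s] t1 by auto
    have "v t1 \<le> v T"
      apply (rule DERIV_nonneg_imp_nondecreasing[of t1 T v])
      using T apply simp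
      subgoal for x
      proof -
        assume x: "t1 \<le> x" "x \<le> T"
        have "w x \<ge> 0"
        proof (cases "x = T")
          case True then show ?thesis using T by simp
        next
          case False then have "x \<in> {t1..<T}" using x by simp
          then show ?thesis using T by fastforce
        qed
        then show ?thesis using dv_at[of x] t1 x by (intro exI[of _ "w x"]) auto
      qed
      done
    then have "v T > -1" using t1 by simp
    then have "Rfun (v T) - 3 * w T > 0" using R_high[of "v T"] T by simp
    then obtain d where d: "d > 0" "\<forall>h>0. h < d \<longrightarrow> w (T - h) < w T"
      using DERIV_pos_inc_left[OF dw[of T]] T t1 by force
    obtain mn where mm: "mn \<le> T - t1" "mn \<le> d" "mn > 0" using d T by (intro that[of "min d (T - t1)"]) auto
    define h where "h = mn / 2"
    have h01: "h > 0" using mm h_def by linarith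
    have h02: "h < d" using mm h_def by linarith
    have h03: "t1 \<le> T - h" using mm h_def by linarith
    have h04: "T - h < T" using mm h_def by linarith
    note h0 = h01 h02 h03 h04
    then have h: "h > 0" "h < d" "T - h \<in> {t1..<T}" by auto
    then have "w (T - h) > 0" using T by force
    moreover have "w (T - h) < w T" using d h by blast
    ultimately show False using T by simp
  qed
  have "v t1 \<le> v t2"
    apply (rule DERIV_nonneg_imp_nondecreasing[of t1 t2 v])
    using t2 apply simp
    subgoal for x using dv_at[of x] t1 pos by (intro exI[of _ "w x"]) (auto simp: less_imp_le)
    done
  then show ?thesis using t1 by simp
qed

lemma up: assumes t2: "t2 > 0" "v t2 > -1" shows "\<exists>t>0. v t > -1 \<and> w t > 0"
proof -
  define S where "S = {0..t2} \<inter> v -` {..-1}"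
  have "closed S" unfolding S_def
    by (rule continuous_closed_preimage) (auto intro: continuous_on_subset[OF v_cont_on])
  moreover have "bounded S" unfolding S_def by (rule bounded_subset[of "{0..t2}"]) auto
  ultimately have cS: "compact S" by (simp add: compact_eq_bounded_closed)
  have "0 \<in> S" unfolding S_def using v0 m t2 by auto
  then obtain T where T: "T \<in> S" "\<forall>x\<in>S. x \<le> T" using compact_attains_sup[OF cS] by auto
  have T1: "0 \<le> T" "T \<le> t2" "v T \<le> -1" using T unfolding S_def by auto
  then have "T < t2" using t2 by (cases "T = t2") auto
  then obtain z where z: "T < z" "z < t2" "v t2 - v T = (t2 - T) * w z"
    using v_mvt[OF T1(1)] by blast
  have "w z > 0"
  proof -
    have "(t2 - T) * w z > 0" using z T1 t2 by simp
    then show ?thesis using z by (simp add: zero_less_mult_iff)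
  qed
  moreover have "v z > -1"
  proof (rule ccontr)
    assume "\<not> v z > -1"
    then have "z \<in> S" unfolding S_def using z T1 by auto
    then show False using T z by force
  qed
  ultimately show ?thesis using z T1 by (intro exI[of _ z]) auto
qed

lemma compl: assumes "\<exists>t>0. w t \<le> 0 \<or> v t > -1"
  shows "(\<exists>t>0. v t > -1 \<and> w t > 0) \<or> (\<exists>t>0. v t < -1 \<and> w t < 0)"
proof (cases "\<exists>t>0. v t > -1")
  case True
  then show ?thesis using up by blast
next
  case False
  then have le: "\<And>t. t > 0 \<Longrightarrow> v t \<le> -1" by force
  from assms False obtain t0 where t0: "t0 > 0" "w t0 \<le> 0" by force
  show ?thesis
  proof (cases "v t0 < -1")
    case vlt: True
    show ?thesis
    proof (cases "w t0 < 0")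
      case True then show ?thesis using vlt t0 by blast
    next
      case False
      then have w0': "w t0 = 0" using t0 by simp
      then have "Rfun (v t0) - 3 * w t0 < 0" using R_neg[OF vlt] by simp
      then obtain d where d: "d > 0" "\<forall>h>0. h < d \<longrightarrow> w (t0 + h) < w t0"
        using DERIV_neg_dec_right[OF dw[OF t0(1)]] by force
      have "isCont v t0" using v_isCont t0 by simp
      then have "eventually (\<lambda>x. v x < -1) (at t0)"
        using vlt by (metis isCont_def order_tendstoD(2))
      then obtain d2 where d2: "d2 > 0" "\<And>x. x \<noteq> t0 \<Longrightarrow> dist x t0 < d2 \<Longrightarrow> v x < -1"
        unfolding eventually_at by blast
      define h where "h = min d d2 / 2"
      have h: "h > 0" "h < d" "h < d2" unfolding h_def using d d2 by auto
      have "w (t0 + h) < 0" using d h w0' by force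
      moreover have "v (t0 + h) < -1" using d2(2)[of "t0 + h"] h by (simp add: dist_real_def)
      ultimately show ?thesis using t0 h by (intro disjI2 exI[of _ "t0 + h"]) auto
    qed
  next
    case False
    then have veq: "v t0 = -1" using le[OF t0(1)] by simp
    show ?thesis
    proof (cases "w t0 < 0")
      case True
      then obtain d where d: "d > 0" "\<forall>h>0. h < d \<longrightarrow> v t0 < v (t0 - h)"
        using DERIV_neg_dec_left[OF dv_at[OF t0(1)]] by force
      define h where "h = min d t0 / 2"
      have h: "h > 0" "h < d" "t0 - h > 0" unfolding h_def using d t0 by auto
      then have "v t0 < v (t0 - h)" using d by blast
      then show ?thesis using le[OF h(3)] veq by simp
    next
      case False
      then have "w t0 = 0" using t0 by simp
      then show ?thesis using no_equil[OF t0(1) veq] by simp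
    qed
  qed
qed

lemma A_ne: assumes n: "n = -4 * m" shows "\<exists>t>0. v t > -1"
proof (rule ccontr)
  assume "\<not> (\<exists>t>0. v t > -1)"
  then have le: "\<And>t. t > 0 \<Longrightarrow> v t \<le> -1" by force
  define Y where "Y s = w s + 3 * v s" for s
  have Ylim: "(Y \<longlongrightarrow> n + 3 * m) (at_right 0)"
    unfolding Y_def by (intro tendsto_intros w_tendsto0 v_tendsto0)
  have Ylow: "n + 3 * m \<le> Y x + 2 * x" if x: "x > 0" for x
  proof (rule tendsto_upperbound[OF Ylim])
    show "eventually (\<lambda>s. Y s \<le> Y x + 2 * x) (at_right 0)"
    proof (rule eventually_at_rightI[of 0 x])
      fix s assume s: "s \<in> {0<..<x}"
      have "\<exists>z. s < z \<and> z < x \<and> Y x - Y s = (x - s) * Rfun (v z)"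
        unfolding Y_def by (rule MVT2) (use s dY in auto)
      then obtain z where z: "s < z" "z < x" "Y x - Y s = (x - s) * Rfun (v z)" by blast
      have "(x - s) * (-2) \<le> (x - s) * Rfun (v z)" using R_ge[of "v z"] z by (intro mult_left_mono) auto
      then show "Y s \<le> Y x + 2 * x" using z s by simp
    qed (use x in auto)
  qed simp
  obtain z where z: "0 < z" "z < 1" "v 1 - v 0 = (1 - 0) * w z" using v_mvt[of 0 1] by auto
  have "w z \<ge> n + 3 * m + 1" using Ylow[OF z(1)] le[OF z(1)] z unfolding Y_def by simp
  then have "v 1 \<ge> n + 4 * m + 1" using z v0 by simp
  then show False using le[of 1] n by simp
qed

lemma B_ne: assumes n: "n < 0" shows "\<exists>t>0. v t < -1 \<and> w t < 0"
proof -
  have "eventually (\<lambda>s. (v s - m) / s < 0) (at_right 0)"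
    using dq n by (rule order_tendstoD)
  moreover have "eventually (\<lambda>s. v s < -1) (at_right 0)"
    using v_tendsto0 m by (rule order_tendstoD)
  ultimately have "eventually (\<lambda>s. (v s - m) / s < 0 \<and> v s < -1) (at_right 0)"
    by (rule eventually_conj)
  then obtain b where b: "b > 0" "\<And>s. 0 < s \<Longrightarrow> s < b \<Longrightarrow> (v s - m) / s < 0 \<and> v s < -1"
    unfolding eventually_at_right_field by auto
  define s where "s = b / 2"
  have s: "0 < s" "s < b" unfolding s_def using b by auto
  obtain z where z: "0 < z" "z < s" "v s - v 0 = (s - 0) * w z" using v_mvt[of 0 s] s by auto
  have "w z = (v s - m) / s" using z s v0 by (simp add: field_simps)
  then have "w z < 0" using b(2)[OF s] by simp
  moreover have "v z < -1" using b(2)[of z] z s by simp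
  ultimately show ?thesis using z by blast
qed

lemma incr: assumes "\<forall>t>0. w t > 0" "0 < s" "s < t" shows "v s < v t"
proof -
  obtain z where "s < z" "z < t" "v t - v s = (t - s) * w z" using v_mvt[of s t] assms by auto
  moreover have "(t - s) * w z > 0" using assms \<open>s < z\<close> by simp
  ultimately show ?thesis by linarith
qed

end

lemma gronwall: assumes tA: "traj v1 w1 m n1" and tB: "traj v2 w2 m n2" and t: "t > 0"
  shows "(v1 t - v2 t)^2 + (w1 t - w2 t)^2 \<le> exp (5 * t) * (n1 - n2)^2"
proof -
  interpret A: traj v1 w1 m n1 by (rule tA)
  interpret B: traj v2 w2 m n2 by (rule tB)
  define f where "f s = exp (-5 * s) * ((v1 s - v2 s)^2 + (w1 s - w2 s)^2)" for s
  have df: "\<exists>y. DERIV f s :> y \<and> y \<le> 0" if s: "s > 0" for s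
  proof -
    have "DERIV f s :> exp (-5 * s) * (-5) * ((v1 s - v2 s)^2 + (w1 s - w2 s)^2) + exp (-5 * s) * (2 * (v1 s - v2 s) * (w1 s - w2 s) + 2 * (w1 s - w2 s) * ((Rfun (v1 s) - Rfun (v2 s)) - 3 * (w1 s - w2 s)))"
      unfolding f_def
      apply (rule derivative_eq_intros A.dv_at[OF s] B.dv_at[OF s] A.dw[OF s] B.dw[OF s] refl)+
      apply (simp add: algebra_simps)
      done
    moreover have "exp (-5 * s) * (-5) * ((v1 s - v2 s)^2 + (w1 s - w2 s)^2) + exp (-5 * s) * (2 * (v1 s - v2 s) * (w1 s - w2 s) + 2 * (w1 s - w2 s) * ((Rfun (v1 s) - Rfun (v2 s)) - 3 * (w1 s - w2 s))) \<le> 0"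
    proof -
      have "2 * (v1 s - v2 s) * (w1 s - w2 s) + 2 * (w1 s - w2 s) * ((Rfun (v1 s) - Rfun (v2 s)) - 3 * (w1 s - w2 s)) - 5 * ((v1 s - v2 s)^2 + (w1 s - w2 s)^2) \<le> 0"
        by (rule key2) (rule R_lip)
      then have "exp (-5 * s) * (2 * (v1 s - v2 s) * (w1 s - w2 s) + 2 * (w1 s - w2 s) * ((Rfun (v1 s) - Rfun (v2 s)) - 3 * (w1 s - w2 s)) - 5 * ((v1 s - v2 s)^2 + (w1 s - w2 s)^2)) \<le> 0"
        by (intro mult_nonneg_nonpos) auto
      then show ?thesis by (simp add: algebra_simps)
    qed
    ultimately show ?thesis by blast
  qed
  have lim: "(f \<longlongrightarrow> exp (-5 * 0) * ((m - m)^2 + (n1 - n2)^2)) (at_right 0)"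
    unfolding f_def by (intro tendsto_intros A.v_tendsto0 B.v_tendsto0 A.w_tendsto0 B.w_tendsto0)
  have "f t \<le> exp (-5 * 0) * ((m - m)^2 + (n1 - n2)^2)"
  proof (rule tendsto_lowerbound[OF lim])
    show "eventually (\<lambda>s. f t \<le> f s) (at_right 0)"
    proof (rule eventually_at_rightI[of 0 t])
      fix s assume s: "s \<in> {0<..<t}"
      show "f t \<le> f s"
        apply (rule DERIV_nonpos_imp_nonincreasing[of s t f])
        using s apply simp
        apply (rule df) using s by simp
    qed (use t in auto)
  qed simp
  then have ft: "f t \<le> (n1 - n2)^2" by simp
  have "(v1 t - v2 t)^2 + (w1 t - w2 t)^2 = exp (5 * t) * f t"
    unfolding f_def by (simp add: exp_minus field_simps)
  also have "\<dots> \<le> exp (5 * t) * (n1 - n2)^2" using ft by (intro mult_left_mono) auto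
  finally show ?thesis .
qed

lemma sq_bound: fixes x y c :: real assumes "x^2 \<le> exp (5 * t) * y^2"
  shows "\<bar>x\<bar> \<le> exp (5 * t / 2) * \<bar>y\<bar>"
proof (rule power2_le_imp_le)
  have "exp (5 * t) = (exp (5 * t / 2))^2" by (simp add: power2_eq_square exp_add[symmetric])
  then show "\<bar>x\<bar>^2 \<le> (exp (5 * t / 2) * \<bar>y\<bar>)^2" using assms by (simp add: power_mult_distrib)
qed simp

theorem lemma4p3:
  fixes m :: real
    and V Vt :: "real \<Rightarrow> real \<Rightarrow> real"
  assumes m: "m < -1"
    and dV: "\<And>n t. t \<ge> 0 \<Longrightarrow>
               ((\<lambda>s. V s n) has_real_derivative Vt t n) (at t within {0..})"
    and dVt: "\<And>n t. t > 0 \<Longrightarrow>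
               ((\<lambda>s. Vt s n) has_real_derivative (Rfun (V t n) - 3 * Vt t n)) (at t)"
    and V0: "\<And>n. V 0 n = m"
    and Vt0: "\<And>n. Vt 0 n = n"
  shows "{n. \<forall>t>0. Vt t n > 0 \<and> V t n \<le> -1} \<noteq> {}
       \<and> closed {n. \<forall>t>0. Vt t n > 0 \<and> V t n \<le> -1}
       \<and> (\<forall>n \<in> {n. \<forall>t>0. Vt t n > 0 \<and> V t n \<le> -1}. \<forall>t>0. V t n < -1)"
proof -
  have tr: "traj (\<lambda>s. V s n) (\<lambda>s. Vt s n) m n" for n
    by unfold_locales (use m dV dVt V0 Vt0 in auto)
  define beta where "beta = {n. \<forall>t>0. Vt t n > 0 \<and> V t n \<le> -1}"
  define A where "A = {n. \<exists>t>0. V t n > -1 \<and> Vt t n > 0}"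
  define B where "B = {n. \<exists>t>0. V t n < -1 \<and> Vt t n < 0}"
  have lipV: "continuous_on UNIV (\<lambda>n. V t n)" and lipW: "continuous_on UNIV (\<lambda>n. Vt t n)" if t: "t > 0" for t
  proof -
    have g: "(V t n1 - V t n2)^2 + (Vt t n1 - Vt t n2)^2 \<le> exp (5 * t) * (n1 - n2)^2" for n1 n2
      using gronwall[OF tr tr t] by simp
    have "lipschitz_on (exp (5 * t / 2)) UNIV (\<lambda>n. V t n)"
    proof (rule lipschitz_onI)
      fix n1 n2 :: real
      have "(V t n1 - V t n2)^2 \<le> exp (5 * t) * (n1 - n2)^2" using g[of n1 n2] by (smt (verit) zero_le_power2)
      then show "dist (V t n1) (V t n2) \<le> exp (5 * t / 2) * dist n1 n2"
        unfolding dist_real_def by (rule sq_bound)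
    qed simp
    then show "continuous_on UNIV (\<lambda>n. V t n)" by (rule lipschitz_on_continuous_on)
    have "lipschitz_on (exp (5 * t / 2)) UNIV (\<lambda>n. Vt t n)"
    proof (rule lipschitz_onI)
      fix n1 n2 :: real
      have "(Vt t n1 - Vt t n2)^2 \<le> exp (5 * t) * (n1 - n2)^2" using g[of n1 n2] by (smt (verit) zero_le_power2)
      then show "dist (Vt t n1) (Vt t n2) \<le> exp (5 * t / 2) * dist n1 n2"
        unfolding dist_real_def by (rule sq_bound)
    qed simp
    then show "continuous_on UNIV (\<lambda>n. Vt t n)" by (rule lipschitz_on_continuous_on)
  qed
  have oA: "open A"
  proof -
    have "A = (\<Union>t\<in>{0<..}. {n. -1 < V t n \<and> 0 < Vt t n})" unfolding A_def by auto
    also have "open \<dots>"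
      by (intro open_UN ballI open_Collect_conj open_Collect_less continuous_on_const lipV lipW) auto
    finally show ?thesis .
  qed
  have oB: "open B"
  proof -
    have "B = (\<Union>t\<in>{0<..}. {n. V t n < -1 \<and> Vt t n < 0})" unfolding B_def by auto
    also have "open \<dots>"
      by (intro open_UN ballI open_Collect_conj open_Collect_less continuous_on_const lipV lipW) auto
    finally show ?thesis .
  qed
  have disj: "A \<inter> B = {}"
  proof (rule ccontr)
    assume "A \<inter> B \<noteq> {}"
    then obtain n tA tB where a: "tA > 0" "V tA n > -1" "Vt tA n > 0" and b: "tB > 0" "V tB n < -1" "Vt tB n < 0"
      unfolding A_def B_def by blast
    have "V (max tA tB) n > -1" using traj.invA[OF tr a] by simp
    moreover have "V (max tA tB) n < -1" using traj.invB[OF tr b] by simp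
    ultimately show False by simp
  qed
  have cmp: "- beta = A \<union> B"
  proof
    show "- beta \<subseteq> A \<union> B"
    proof
      fix n assume "n \<in> - beta"
      then have "\<exists>t>0. Vt t n \<le> 0 \<or> V t n > -1" unfolding beta_def by force
      then show "n \<in> A \<union> B" using traj.compl[OF tr] unfolding A_def B_def by blast
    qed
    show "A \<union> B \<subseteq> - beta" unfolding A_def B_def beta_def by force
  qed
  have Ane: "A \<noteq> {}"
  proof -
    obtain t where "t > 0" "V t (-4 * m) > -1" using traj.A_ne[OF tr, of "-4 * m"] by auto
    then have "-4 * m \<in> A" using traj.up[OF tr] unfolding A_def by blast
    then show ?thesis by blast
  qed
  have Bne: "B \<noteq> {}"
  proof -
    have "-1 \<in> B" using traj.B_ne[OF tr, of "-1"] unfolding B_def by simp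
    then show ?thesis by blast
  qed
  have ne: "beta \<noteq> {}"
  proof
    assume "beta = {}"
    then have "UNIV \<subseteq> A \<union> B" using cmp by auto
    then have "A \<inter> UNIV = {} \<or> B \<inter> UNIV = {}"
      using connectedD[OF connected_UNIV oA oB] disj by auto
    then show False using Ane Bne by auto
  qed
  have cl: "closed beta" unfolding closed_def using cmp oA oB by (simp add: open_Un)
  have strict: "\<forall>n\<in>beta. \<forall>t>0. V t n < -1"
  proof (intro ballI allI impI)
    fix n t :: real assume n: "n \<in> beta" and t: "t > 0"
    have pos: "\<forall>t>0. Vt t n > 0" using n unfolding beta_def by blast
    have "V t n < V (t + 1) n" using traj.incr[OF tr pos t] by simp
    moreover have "V (t + 1) n \<le> -1" using n t unfolding beta_def by simp
    ultimately show "V t n < -1" by simp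
  qed
  show ?thesis using ne cl strict unfolding beta_def by blast
qed

end
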